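(* Let $\mathfrak g$ be a $3$-dimensional complex vector space with basis $\{e_1,e_2,e_3\}$ and let $\mu$ be the product with matrix $\begin{pmatrix}0&0&0\\0&0&1\\0&i&0\end{pmatrix}$, i.e. $\mu(e_2,e_3)=0$, $\mu(e_3,e_1)=ie_3$, $\mu(e_1,e_2)=e_2$. Then $T\in\operatorname{HL}(\mu)$ if and only if its matrix has the block form $T=\begin{pmatrix}T_{11}&0\\ v&\Theta\end{pmatrix}$ with $T_{11}\in\mathbb C$, $v\in\mathbb C^2$, $\Theta\in\operatorname{Mat}_{2\times2}(\mathbb C)$ (i.e. $T_{12}=T_{13}=0$). Moreover, for such $T$, the condition $\det(\Theta-T_{11}\mathbb 1_2)\neq0$ is invariant under the $G_\mu$-action, and: (1) if $\det(\Theta-T_{11}\mathbb 1_2)\neq 0$ then $T$ is equivalent to a map of the form $\begin{pmatrix}T'_{11}&0\\0&\Theta'\end{pmatrix}$ with $T'_{11}\in\mathbb C$, $\Theta'\in\operatorname{Mat}_{2\times 2}(\mathbb C)$; (2) if $\det(\Theta-T_{11}\mathbb 1_2)=0$ then $T$ is equivalent to a map of the form $\begin{pmatrix}T'_{11}&0\\ v'&\Theta'\end{pmatrix}$ with $\det(\Theta'-T'_{11}\mathbb 1_2)=0$.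
   Context: The matrix $(T_{ij})$ of a linear map in the basis $\{e_j\}$ is defined by $T(e_j)=\sum_iT_{ij}e_i$. $\operatorname{HL}(\mu)$ is the set of linear maps $T:\mathfrak g\to\mathfrak g$ with $\mu(T(x),\mu(y,z))+\mu(T(y),\mu(z,x))+\mu(T(z),\mu(x,y))=0$ for all $x,y,z$. $G_\mu=\{g\in\operatorname{GL}(\mathfrak g)\mid g(\mu(x,y))=\mu(g(x),g(y))\ \forall x,y\}$ is the automorphism group of $\mu$; it acts on $\operatorname{HL}(\mu)$ by $T\mapsto gTg^{-1}$, and $T,T'$ are equivalent if $T'=gTg^{-1}$ for some $g\in G_\mu$. *)

theory Defs
  imports "HOL-Analysis.Analysis"
begin

text \<open>Linear maps are 3x3 matrices T :: complex^3^3 with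
  T(e_j) = sum_i T$i$j e_i, i.e. T acts by T *v x.\<close>

type_synonym vec3 = "complex ^ 3"
type_synonym mat3 = "complex ^ 3 ^ 3"

definition mu_basis :: "3 \<Rightarrow> 3 \<Rightarrow> vec3" where
  "mu_basis j k =
     (if (j, k) = (3, 1) then \<i> *s axis 3 1 else
      if (j, k) = (1, 3) then - (\<i> *s axis 3 1) else
      if (j, k) = (1, 2) then axis 2 1 else
      if (j, k) = (2, 1) then - axis 2 1 else 0)"

definition mu :: "vec3 \<Rightarrow> vec3 \<Rightarrow> vec3" where
  "mu x y = (\<Sum>j\<in>UNIV. \<Sum>k\<in>UNIV. (x $ j * y $ k) *s mu_basis j k)"

definition HL :: "mat3 set" where
  "HL = {T. \<forall>x y z. mu (T *v x) (mu y z) + mu (T *v y) (mu z x) + mu (T *v z) (mu x y) = 0}"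

definition G_mu :: "mat3 set" where
  "G_mu = {g. invertible g \<and> (\<forall>x y. g *v mu x y = mu (g *v x) (g *v y))}"

definition act :: "mat3 \<Rightarrow> mat3 \<Rightarrow> mat3" where
  "act g T = g ** T ** matrix_inv g"

text \<open>det(Theta - T11 * 1_2), where Theta is the lower-right 2x2 block (rows/cols 2,3).\<close>
definition theta_det :: "mat3 \<Rightarrow> complex" where
  "theta_det T = (T$2$2 - T$1$1) * (T$3$3 - T$1$1) - T$2$3 * T$3$2"

end

theory Submission
  imports Defs
begin
lemma mu1: "mu x y $ 1 = 0" and mu2: "mu x y $ 2 = x$1 * y$2 - x$2 * y$1"
  and mu3: "mu x y $ 3 = \<i>*(x$3 * y$1 - x$1 * y$3)"
  by (simp_all add: mu_def mu_basis_def sum_3 axis_def algebra_simps)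
lemma mv: "((A::mat3) *v x) $ i = A$i$1 * x$1+A$i$2 * x$2+A$i$3 * x$3"
  by (simp add: matrix_vector_mult_def sum_3)
lemma mm: "((A::mat3) ** B) $ i $ j = A$i$1 * B$1$j + A$i$2 * B$2$j + A$i$3 * B$3$j"
  by (simp add: matrix_matrix_mult_def sum_3)

definition m3 :: "complex \<Rightarrow> complex \<Rightarrow> complex \<Rightarrow> complex \<Rightarrow> complex \<Rightarrow> complex \<Rightarrow> complex \<Rightarrow> complex \<Rightarrow> complex \<Rightarrow> mat3" where
 "m3 a b c d e f g h k = vector [vector [a,b,c], vector [d,e,f], vector [g,h,k]]"
lemma m3_ent[simp]: "m3 a b c d e f g h k $1$1 = a" "m3 a b c d e f g h k $1$2 = b" "m3 a b c d e f g h k $1$3 = c"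
 "m3 a b c d e f g h k $2$1 = d" "m3 a b c d e f g h k $2$2 = e" "m3 a b c d e f g h k $2$3 = f"
 "m3 a b c d e f g h k $3$1 = g" "m3 a b c d e f g h k $3$2 = h" "m3 a b c d e f g h k $3$3 = k"
  by (simp_all add: m3_def)

lemma mat1_ent[simp]: "(mat 1 :: mat3)$1$1 = 1" "(mat 1 :: mat3)$2$2 = 1" "(mat 1 :: mat3)$3$3 = 1"
  "(mat 1 :: mat3)$1$2 = 0" "(mat 1 :: mat3)$1$3 = 0" "(mat 1 :: mat3)$2$1 = 0"
  "(mat 1 :: mat3)$2$3 = 0" "(mat 1 :: mat3)$3$1 = 0" "(mat 1 :: mat3)$3$2 = 0"
  by (simp_all add: mat_def)

lemma mat_eq3: "(A::mat3) = B \<longleftrightarrow> A$1$1 = B$1$1 \<and> A$1$2 = B$1$2 \<and> A$1$3 = B$1$3 \<and>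
  A$2$1 = B$2$1 \<and> A$2$2 = B$2$2 \<and> A$2$3 = B$2$3 \<and> A$3$1 = B$3$1 \<and> A$3$2 = B$3$2 \<and> A$3$3 = B$3$3"
  by (auto simp: vec_eq_iff forall_3)

lemma inv_unique: assumes "(A::mat3) ** B = mat 1" "B ** A = mat 1" shows "matrix_inv A = B"
proof -
  have "A ** matrix_inv A = mat 1 \<and> matrix_inv A ** A = mat 1"
    unfolding matrix_inv_def by (rule someI[of _ B]) (use assms in simp)
  then have "matrix_inv A = matrix_inv A ** (A ** B)" using assms by (simp add: matrix_mul_rid)
  also have "\<dots> = (matrix_inv A ** A) ** B" by (simp add: matrix_mul_assoc)
  finally show ?thesis using \<open>A ** matrix_inv A = mat 1 \<and> matrix_inv A ** A = mat 1\<close> by (simp add: matrix_mul_lid)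
qed

lemma HL_iff: "T \<in> HL \<longleftrightarrow> T$1$2 = 0 \<and> T$1$3 = 0"
proof
  assume "T \<in> HL"
  then have "mu (T *v axis 1 1) (mu (axis 2 1) (axis 3 1)) + mu (T *v axis 2 1) (mu (axis 3 1) (axis 1 1)) + mu (T *v axis 3 1) (mu (axis 1 1) (axis 2 1)) = 0"
    unfolding HL_def by blast
  from arg_cong[where f="\<lambda>v. v$2", OF this] arg_cong[where f="\<lambda>v. v$3", OF this]
  show "T$1$2 = 0 \<and> T$1$3 = 0" by (simp add: mu1 mu2 mu3 mv axis_def)
next
  assume "T$1$2 = 0 \<and> T$1$3 = 0"
  then show "T \<in> HL" unfolding HL_def
    by (simp add: vec_eq_iff forall_3 mu1 mu2 mu3 mv algebra_simps)
qed

lemma G_ent: assumes "g \<in> G_mu" shows "g$1$2 = 0" "g$1$3 = 0" "det g \<noteq> 0"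
proof -
  have "g *v mu (axis 1 1) (axis 2 1) = mu (g *v axis 1 1) (g *v axis 2 1)"
    "g *v mu (axis 3 1) (axis 1 1) = mu (g *v axis 3 1) (g *v axis 1 1)"
    using assms unfolding G_mu_def by blast+
  from arg_cong[where f="\<lambda>v. v$1", OF this(1)] arg_cong[where f="\<lambda>v. v$1", OF this(2)]
  show "g$1$2 = 0" "g$1$3 = 0" by (simp_all add: mu1 mu2 mu3 mv axis_def)
  show "det g \<noteq> 0" using assms invertible_det_nz unfolding G_mu_def by blast
qed
lemma m3_self: "(A::mat3) = m3 (A$1$1) (A$1$2) (A$1$3) (A$2$1) (A$2$2) (A$2$3) (A$3$1) (A$3$2) (A$3$3)"
  by (simp add: mat_eq3)

lemma inv_alg: fixes a p q r s u v d :: complex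
  assumes "a \<noteq> 0" "d \<noteq> 0" "d = p * s - q * r"
  defines "H \<equiv> m3 (1/a) 0 0 (-(s * u - q * v)/(d * a)) (s/d) (-q/d) (-(-r * u + p * v)/(d * a)) (-r/d) (p/d)"
  shows "m3 a 0 0 u p q v r s ** H = mat 1" "H ** m3 a 0 0 u p q v r s = mat 1"
  using assms(1,2) unfolding mat_eq3 mm m3_ent mat1_ent H_def
  by (simp_all add: field_simps) (simp_all add: assms(3) algebra_simps)

lemma inv_block: fixes g :: mat3
  assumes z: "g$1$2 = 0" "g$1$3 = 0" and dt: "det g \<noteq> 0"
  shows "\<exists>d. d \<noteq> 0 \<and> g$1$1 \<noteq> 0 \<and> d = g$2$2 * g$3$3 - g$2$3 * g$3$2 \<and> matrix_inv g = m3 (1/g$1$1) 0 0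
      (-(g$3$3 * g$2$1 - g$2$3 * g$3$1)/(d * g$1$1)) (g$3$3/d) (-g$2$3/d)
      (-(-g$3$2 * g$2$1 + g$2$2 * g$3$1)/(d * g$1$1)) (-g$3$2/d) (g$2$2/d)"
proof -
  define d where "d = g$2$2 * g$3$3 - g$2$3 * g$3$2"
  have "det g = g$1$1 * d" using z by (simp add: det_3 d_def algebra_simps)
  then have a: "g$1$1 \<noteq> 0" and dl: "d \<noteq> 0" using dt by auto
  have gg: "g = m3 (g$1$1) 0 0 (g$2$1) (g$2$2) (g$2$3) (g$3$1) (g$3$2) (g$3$3)"
    using z by (subst m3_self) simp
  show ?thesis
    apply (rule exI[of _ d])
    using a dl d_def inv_alg[OF a dl d_def] gg
    by (metis inv_unique)
qed

lemma theta_alg: fixes a p q r s u v d t w x y z e :: complex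
  assumes "a \<noteq> 0" "d \<noteq> 0" "d = p * s - q * r"
  defines "H \<equiv> m3 (1/a) 0 0 (-(s * u - q * v)/(d * a)) (s/d) (-q/d) (-(-r * u + p * v)/(d * a)) (-r/d) (p/d)"
  shows "theta_det (m3 a 0 0 u p q v r s ** m3 t 0 0 w x y z e f ** H) = theta_det (m3 t 0 0 w x y z e f)"
  using assms(1,2) unfolding theta_det_def mm m3_ent H_def
  by (simp add: field_simps) (simp add: assms(3) algebra_simps)

lemma act_theta: assumes "T \<in> HL" "g \<in> G_mu" shows "theta_det (act g T) = theta_det T"
proof -
  have z: "g$1$2 = 0" "g$1$3 = 0" "det g \<noteq> 0" using G_ent assms(2) by auto
  have t: "T$1$2 = 0" "T$1$3 = 0" using assms(1) HL_iff by auto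
  obtain d where d: "d \<noteq> 0" "g$1$1 \<noteq> 0" "d = g$2$2 * g$3$3 - g$2$3 * g$3$2" and
    inv: "matrix_inv g = m3 (1/g$1$1) 0 0
      (-(g$3$3 * g$2$1 - g$2$3 * g$3$1)/(d * g$1$1)) (g$3$3/d) (-g$2$3/d)
      (-(-g$3$2 * g$2$1 + g$2$2 * g$3$1)/(d * g$1$1)) (-g$3$2/d) (g$2$2/d)"
    using inv_block[OF z] by blast
  have gg: "g = m3 (g$1$1) 0 0 (g$2$1) (g$2$2) (g$2$3) (g$3$1) (g$3$2) (g$3$3)"
    using z by (subst m3_self) simp
  have tt: "T = m3 (T$1$1) 0 0 (T$2$1) (T$2$2) (T$2$3) (T$3$1) (T$3$2) (T$3$3)"
    using t by (subst m3_self) simp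
  show ?thesis
    unfolding act_def inv using theta_alg[OF d(2,1,3), where t="T$1$1" and w="T$2$1" and x="T$2$2" and y="T$2$3" and z="T$3$1" and e="T$3$2" and f="T$3$3" and u="g$2$1" and v="g$3$1"]
    gg tt by metis
qed
lemma shear_G: "m3 1 0 0 u 1 0 w 0 1 \<in> G_mu"
proof -
  have "m3 1 0 0 u 1 0 w 0 1 ** m3 1 0 0 (-u) 1 0 (-w) 0 1 = mat 1"
       "m3 1 0 0 (-u) 1 0 (-w) 0 1 ** m3 1 0 0 u 1 0 w 0 1 = mat 1"
    unfolding mat_eq3 mm m3_ent mat1_ent by simp_all
  then have "invertible (m3 1 0 0 u 1 0 w 0 1)" unfolding invertible_def by blast
  moreover have "\<forall>x y. m3 1 0 0 u 1 0 w 0 1 *v mu x y = mu (m3 1 0 0 u 1 0 w 0 1 *v x) (m3 1 0 0 u 1 0 w 0 1 *v y)"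
    by (simp add: vec_eq_iff forall_3 mu1 mu2 mu3 mv algebra_simps)
  ultimately show ?thesis unfolding G_mu_def by blast
qed


lemma split_alg: fixes t w x y z e f D :: complex
  assumes "D \<noteq> 0" "D = (x - t) * (f - t) - y * e"
  defines "a \<equiv> ((f - t) * w - y * z) / D" and "b \<equiv> (- e * w + (x - t) * z) / D"
  shows "(m3 1 0 0 a 1 0 b 0 1 ** m3 t 0 0 w x y z e f ** m3 1 0 0 (-a) 1 0 (-b) 0 1)$2$1 = 0"
    "(m3 1 0 0 a 1 0 b 0 1 ** m3 t 0 0 w x y z e f ** m3 1 0 0 (-a) 1 0 (-b) 0 1)$3$1 = 0"
  using assms(1) unfolding mm m3_ent a_def b_def
  by (simp_all add: field_simps) (simp_all add: assms(2) algebra_simps)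

lemma part3: assumes "T \<in> HL" "theta_det T \<noteq> 0"
  shows "\<exists>g \<in> G_mu. (act g T)$1$2 = 0 \<and> (act g T)$1$3 = 0 \<and> (act g T)$2$1 = 0 \<and> (act g T)$3$1 = 0"
proof -
  have t: "T$1$2 = 0" "T$1$3 = 0" using assms(1) HL_iff by auto
  have tt: "T = m3 (T$1$1) 0 0 (T$2$1) (T$2$2) (T$2$3) (T$3$1) (T$3$2) (T$3$3)"
    using t by (subst m3_self) simp
  define D where "D = theta_det T"
  have D: "D \<noteq> 0" "D = (T$2$2 - T$1$1) * (T$3$3 - T$1$1) - T$2$3 * T$3$2"
    using assms(2) by (simp_all add: D_def theta_det_def)
  define a where "a = ((T$3$3 - T$1$1) * T$2$1 - T$2$3 * T$3$1) / D"
  define b where "b = (- T$3$2 * T$2$1 + (T$2$2 - T$1$1) * T$3$1) / D"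
  have inv: "matrix_inv (m3 1 0 0 a 1 0 b 0 1) = m3 1 0 0 (-a) 1 0 (-b) 0 1"
    by (rule inv_unique) (simp_all add: mat_eq3 mm)
  have e: "(act (m3 1 0 0 a 1 0 b 0 1) T)$2$1 = 0" "(act (m3 1 0 0 a 1 0 b 0 1) T)$3$1 = 0"
    unfolding act_def inv
    using split_alg[OF D, where w="T$2$1" and z="T$3$1"] tt unfolding a_def[symmetric] b_def[symmetric]
    by (metis, metis)
  have f: "(act (m3 1 0 0 a 1 0 b 0 1) T)$1$2 = 0" "(act (m3 1 0 0 a 1 0 b 0 1) T)$1$3 = 0"
    unfolding act_def inv mm m3_ent using t by simp_all
  show ?thesis using e f shear_G by blast
qed

lemma part4: assumes "T \<in> HL" "theta_det T = 0"
  shows "\<exists>g \<in> G_mu. (act g T)$1$2 = 0 \<and> (act g T)$1$3 = 0 \<and> theta_det (act g T) = 0"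
proof -
  have "mat 1 = m3 1 0 0 0 1 0 0 0 1" by (simp add: mat_eq3)
  then have g: "mat 1 \<in> G_mu" using shear_G[of 0 0] by simp
  have "matrix_inv (mat 1 :: mat3) = mat 1" by (rule inv_unique) (simp_all add: matrix_mul_lid)
  then have "act (mat 1) T = T" by (simp add: act_def matrix_mul_lid matrix_mul_rid)
  moreover have "T$1$2 = 0" "T$1$3 = 0" using assms(1) HL_iff by auto
  ultimately show ?thesis using g assms(2) by (intro bexI[of _ "mat 1"]) simp_all
qed

theorem proposition5p4:
  shows "(\<forall>T. T \<in> HL \<longleftrightarrow> T$1$2 = 0 \<and> T$1$3 = 0)
    \<and> (\<forall>T g. T \<in> HL \<and> g \<in> G_mu \<longrightarrow>
           (theta_det T \<noteq> 0 \<longleftrightarrow> theta_det (act g T) \<noteq> 0))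
    \<and> (\<forall>T. T \<in> HL \<and> theta_det T \<noteq> 0 \<longrightarrow>
           (\<exists>g \<in> G_mu. (act g T)$1$2 = 0 \<and> (act g T)$1$3 = 0
                      \<and> (act g T)$2$1 = 0 \<and> (act g T)$3$1 = 0))
    \<and> (\<forall>T. T \<in> HL \<and> theta_det T = 0 \<longrightarrow>
           (\<exists>g \<in> G_mu. (act g T)$1$2 = 0 \<and> (act g T)$1$3 = 0
                      \<and> theta_det (act g T) = 0))"
  apply (intro conjI allI impI)
  using HL_iff act_theta part3 part4 by auto
end
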